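(* Let $s\in(1,2]$ and let $f_1,\dots,f_n\in\overline{B}_s[0,1]$ be linearly independent with $\operatorname{span}\{f_i\}_{i=1}^n\subseteq\overline{B}_s[0,1]\cup\{0\}$. Then there exists a nonempty open interval $I\subset[0,1]$ such that for every $(a_1,\dots,a_n)\in\mathbb{R}^n\setminus\{(0,\dots,0)\}$, $\overline{\dim}_B G_{\sum_{i=1}^n a_if_i}([0,1]\setminus I)=s$, i.e. $\big(\sum_{i=1}^n a_if_i\big)|_{[0,1]\setminus I}\in\overline{B}_s([0,1]\setminus I)$.
   Context: $C[0,1]$ is the space of real-valued continuous functions on $[0,1]$; $G_f(E)=\{(x,f(x)):x\in E\}$; $\overline{\dim}_B$ is upper box dimension. For $E\subseteq[0,1]$, $\overline{B}_s(E)$ is the set of bounded continuous real functions $f$ on $E$ with $\overline{\dim}_B G_f(E)=s$; in particular $\overline{B}_s[0,1]=\{f\in C[0,1]:\overline{\dim}_B G_f([0,1])=s\}$. *)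

theory Defs
  imports "HOL-Analysis.Analysis"
begin

definition graph_on :: "(real \<Rightarrow> real) \<Rightarrow> real set \<Rightarrow> (real \<times> real) set" where
  "graph_on f E = (\<lambda>x. (x, f x)) ` E"

definition cover_num :: "real \<Rightarrow> (real \<times> real) set \<Rightarrow> nat" where
  "cover_num \<delta> F = (LEAST k. \<exists>C. finite C \<and> card C = k \<and> F \<subseteq> (\<Union>c\<in>C. cball c \<delta>))"

definition upper_box_dim :: "(real \<times> real) set \<Rightarrow> ereal" where
  "upper_box_dim F =
     Limsup (at_right (0::real)) (\<lambda>\<delta>. ereal (ln (real (cover_num \<delta> F)) / (- ln \<delta>)))"

end

theory Submission
  imports Defs "HOL-Real_Asymp.Real_Asymp"
begin


lemma cover_le:
  assumes "finite C" "F \<subseteq> (\<Union>c\<in>C. cball c \<delta>)"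
  shows "cover_num \<delta> F \<le> card C"
  unfolding cover_num_def by (rule Least_le) (use assms in blast)

lemma cover_ex:
  assumes "compact F" "\<delta> > 0"
  shows "\<exists>C. finite C \<and> card C = cover_num \<delta> F \<and> F \<subseteq> (\<Union>c\<in>C. cball c \<delta>)"
proof -
  obtain C where C: "finite C" "F \<subseteq> (\<Union>c\<in>C. ball c \<delta>)"
  proof (rule compactE_image[OF assms(1), of F "\<lambda>c. ball c \<delta>"])
    show "F \<subseteq> (\<Union>c\<in>F. ball c \<delta>)" using assms(2) by auto
  qed auto
  moreover have "(\<Union>c\<in>C. ball c \<delta>) \<subseteq> (\<Union>c\<in>C. cball c \<delta>)"
    by (intro UN_mono order_refl ball_subset_cball)
  ultimately have "F \<subseteq> (\<Union>c\<in>C. cball c \<delta>)" using C(2) by (meson subset_trans)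
  with C(1) have "\<exists>k C. finite C \<and> card C = k \<and> F \<subseteq> (\<Union>c\<in>C. cball c \<delta>)" by blast
  then obtain k where "\<exists>C. finite C \<and> card C = k \<and> F \<subseteq> (\<Union>c\<in>C. cball c \<delta>)" by blast
  then have "\<exists>C. finite C \<and> card C = (LEAST k. \<exists>C. finite C \<and> card C = k \<and> F \<subseteq> (\<Union>c\<in>C. cball c \<delta>)) \<and> F \<subseteq> (\<Union>c\<in>C. cball c \<delta>)"
    by (rule LeastI)
  then show ?thesis unfolding cover_num_def .
qed

lemma cover_mono:
  assumes "F \<subseteq> F'" "compact F'" "\<delta> > 0"
  shows "cover_num \<delta> F \<le> cover_num \<delta> F'"
proof -
  obtain C where "finite C" "card C = cover_num \<delta> F'" "F' \<subseteq> (\<Union>c\<in>C. cball c \<delta>)"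
    using cover_ex[OF assms(2,3)] by blast
  then show ?thesis using cover_le[of C F \<delta>] assms(1) by auto
qed

lemma cover_union:
  assumes "compact A" "compact B" "\<delta> > 0"
  shows "cover_num \<delta> (A \<union> B) \<le> cover_num \<delta> A + cover_num \<delta> B"
proof -
  obtain C where C: "finite C" "card C = cover_num \<delta> A" "A \<subseteq> (\<Union>c\<in>C. cball c \<delta>)"
    using cover_ex[OF assms(1,3)] by blast
  obtain D where D: "finite D" "card D = cover_num \<delta> B" "B \<subseteq> (\<Union>c\<in>D. cball c \<delta>)"
    using cover_ex[OF assms(2,3)] by blast
  have "cover_num \<delta> (A \<union> B) \<le> card (C \<union> D)"
    by (rule cover_le) (use C D in auto)
  also have "\<dots> \<le> card C + card D" by (rule card_Un_le)
  finally show ?thesis using C D by simp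
qed

lemma graph_compact:
  assumes "compact E" "continuous_on E g"
  shows "compact (graph_on g E)"
  unfolding graph_on_def
  by (rule compact_continuous_image) (auto intro!: continuous_intros assms)

lemma graph_cong:
  assumes "\<And>x. x \<in> E \<Longrightarrow> g x = h x"
  shows "graph_on g E = graph_on h E"
  using assms unfolding graph_on_def by auto

lemma ev_pow: 
  fixes C e :: real assumes "e > 0"
  shows "eventually (\<lambda>d. C \<le> d powr (-e)) (at_right 0)"
  using assms by real_asymp



definition ratio :: "(real \<times> real) set \<Rightarrow> real \<Rightarrow> real" where
  "ratio F d = ln (real (cover_num d F)) / (- ln d)"

lemma ubd_ratio: "upper_box_dim F = Limsup (at_right 0) (\<lambda>d. ereal (ratio F d))"
  unfolding upper_box_dim_def ratio_def by simp

lemma ev_small: "eventually (\<lambda>d::real. 0 < d \<and> d < 1) (at_right 0)"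
  using eventually_at_right_real[of 0 1] by simp

lemma dim_lt_D:
  assumes "upper_box_dim F < ereal t"
  shows "eventually (\<lambda>d. real (cover_num d F) \<le> d powr (-t)) (at_right 0)"
proof -
  have "eventually (\<lambda>d. ereal (ratio F d) < ereal t) (at_right 0)"
    using Limsup_lessD[OF assms[unfolded ubd_ratio]] .
  then show ?thesis using ev_small
  proof eventually_elim
    case (elim d)
    show ?case
    proof (cases "cover_num d F = 0")
      case False
      have l: "- ln d > 0" using elim by simp
      from elim have "ln (real (cover_num d F)) / (- ln d) < t"
        unfolding ratio_def by simp
      then have "ln (real (cover_num d F)) < t * (- ln d)"
        by (subst (asm) pos_divide_less_eq[OF l]) simp
      then have "exp (ln (real (cover_num d F))) < exp (t * (- ln d))" by simp
      then show ?thesis using False elim by (simp add: powr_def)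
    qed simp
  qed
qed

lemma dim_le_I:
  assumes "t \<ge> 0" "eventually (\<lambda>d. real (cover_num d F) \<le> d powr (-t)) (at_right 0)"
  shows "upper_box_dim F \<le> ereal t"
  unfolding ubd_ratio
proof (rule Limsup_bounded)
  show "eventually (\<lambda>d. ereal (ratio F d) \<le> ereal t) (at_right 0)"
    using assms(2) ev_small
  proof eventually_elim
    case (elim d)
    have l: "- ln d > 0" using elim by simp
    show ?case
    proof (cases "cover_num d F = 0")
      case True then show ?thesis using assms(1) by (simp add: ratio_def)
    next
      case False
      have "ln (real (cover_num d F)) \<le> ln (d powr (-t))"
        using elim False by (subst ln_le_cancel_iff) auto
      also have "\<dots> = t * (- ln d)" using elim by (simp add: ln_powr)
      finally have "ln (real (cover_num d F)) / (- ln d) \<le> t"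
        by (subst pos_divide_le_eq[OF l]) simp
      then show ?thesis unfolding ratio_def by simp
    qed
  qed
qed

lemma dim_le_const:
  assumes "t \<ge> 0" "t < t'" "eventually (\<lambda>d. real (cover_num d F) \<le> C * d powr (-t)) (at_right 0)"
  shows "upper_box_dim F \<le> ereal t'"
proof (rule dim_le_I)
  show "0 \<le> t'" using assms by simp
  show "eventually (\<lambda>d. real (cover_num d F) \<le> d powr (-t')) (at_right 0)"
  proof -
    have tt: "t' - t > 0" using assms(2) by simp
    show ?thesis
    using assms(3) ev_small ev_pow[OF tt, of C]
  proof eventually_elim
    case (elim d)
    have "real (cover_num d F) \<le> C * d powr (-t)" using elim by simp
    also have "\<dots> \<le> d powr (- (t' - t)) * d powr (-t)"
      using elim by (intro mult_right_mono) auto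
    also have "\<dots> = d powr (-t')" using elim by (simp add: powr_add[symmetric])
    finally show ?case .
  qed
  qed
qed

lemma dim_mono:
  assumes "F \<subseteq> F'" "compact F'"
  shows "upper_box_dim F \<le> upper_box_dim F'"
  unfolding ubd_ratio
proof (rule Limsup_mono)
  show "eventually (\<lambda>d. ereal (ratio F d) \<le> ereal (ratio F' d)) (at_right 0)"
    using ev_small
  proof eventually_elim
    case (elim d)
    have l: "- ln d > 0" using elim by simp
    have le: "cover_num d F \<le> cover_num d F'" using cover_mono assms elim by auto
    have "ln (real (cover_num d F)) \<le> ln (real (cover_num d F'))"
      using le by (cases "cover_num d F = 0"; cases "cover_num d F' = 0") auto
    then have "ln (real (cover_num d F)) / (- ln d) \<le> ln (real (cover_num d F')) / (- ln d)"
      by (rule divide_right_mono) (use l in simp)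
    then show ?case unfolding ratio_def by simp
  qed
qed

lemma lin_dep:
  "\<And>K v. finite K \<Longrightarrow> card K > n \<Longrightarrow>
     \<exists>c :: nat \<Rightarrow> real. (\<exists>k\<in>K. c k \<noteq> 0) \<and> (\<forall>i<n. (\<Sum>k\<in>K. c k * v k i) = 0)"
proof (induction n)
  case 0
  then obtain k where "k \<in> K" by fastforce
  then show ?case by (intro exI[of _ "\<lambda>_. 1"]) auto
next
  case (Suc n K v)
  show ?case
  proof (cases "\<forall>k\<in>K. v k n = 0")
    case True
    obtain c where c: "\<exists>k\<in>K. c k \<noteq> 0" "\<forall>i<n. (\<Sum>k\<in>K. c k * v k i) = 0"
      using Suc.IH[of K v] Suc.prems by auto
    have "\<forall>i<Suc n. (\<Sum>k\<in>K. c k * v k i) = 0"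
    proof (intro allI impI)
      fix i assume "i < Suc n"
      then consider "i < n" | "i = n" by linarith
      then show "(\<Sum>k\<in>K. c k * v k i) = 0" using c True by cases auto
    qed
    with c show ?thesis by blast
  next
    case False
    then obtain k0 where k0: "k0 \<in> K" "v k0 n \<noteq> 0" by blast
    define K' where "K' = K - {k0}"
    define w where "w k i = v k i - (v k n / v k0 n) * v k0 i" for k i
    have fK': "finite K'" "card K' > n" using Suc.prems k0 unfolding K'_def by auto
    obtain c' where c': "\<exists>k\<in>K'. c' k \<noteq> 0" "\<forall>i<n. (\<Sum>k\<in>K'. c' k * w k i) = 0"
      using Suc.IH[OF fK'] by blast
    define c where "c k = (if k = k0 then - (\<Sum>k\<in>K'. c' k * v k n) / v k0 n else c' k)" for k
    have wn: "\<forall>i<Suc n. (\<Sum>k\<in>K'. c' k * w k i) = 0"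
    proof (intro allI impI)
      fix i assume "i < Suc n"
      then consider "i < n" | "i = n" by linarith
      then show "(\<Sum>k\<in>K'. c' k * w k i) = 0"
      proof cases
        case 2 then show ?thesis using k0 by (simp add: w_def)
      qed (use c' in auto)
    qed
    have "\<forall>i<Suc n. (\<Sum>k\<in>K. c k * v k i) = 0"
    proof (intro allI impI)
      fix i assume i: "i < Suc n"
      have K: "K = insert k0 K'" "k0 \<notin> K'" using k0 unfolding K'_def by auto
      have "(\<Sum>k\<in>K'. c k * v k i) = (\<Sum>k\<in>K'. c' k * v k i)"
        by (rule sum.cong) (use K in \<open>auto simp: c_def\<close>)
      then have "(\<Sum>k\<in>K. c k * v k i) = c k0 * v k0 i + (\<Sum>k\<in>K'. c' k * v k i)"
        using K fK' by simp
      also have "(\<Sum>k\<in>K'. c' k * v k i) = (\<Sum>k\<in>K'. c' k * w k i) + (\<Sum>k\<in>K'. c' k * v k n) / v k0 n * v k0 i"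
        unfolding w_def by (simp add: algebra_simps sum.distrib sum_subtractf sum_distrib_left sum_divide_distrib)
      finally show "(\<Sum>k\<in>K. c k * v k i) = 0" using wn i by (simp add: c_def)
    qed
    moreover have "\<exists>k\<in>K. c k \<noteq> 0" using c' unfolding c_def K'_def by auto
    ultimately show ?thesis by blast
  qed
qed



lemma interval_cover:
  fixes p q r :: real
  assumes "finite D" "{p..q} \<subseteq> (\<Union>y\<in>D. {y - r..y + r})" "p \<le> q" "r \<ge> 0"
  shows "q - p \<le> 2 * r * card D"
proof -
  have "ennreal (q - p) = emeasure lborel {p..q}" using assms by simp
  also have "\<dots> \<le> emeasure lborel (\<Union>y\<in>D. {y - r..y + r})"
    by (rule emeasure_mono[OF assms(2)]) (use assms(1) in auto)
  also have "\<dots> \<le> (\<Sum>y\<in>D. emeasure lborel {y - r..y + r})"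
    by (rule emeasure_subadditive_finite[OF assms(1)]) auto
  also have "\<dots> = (\<Sum>y\<in>D. ennreal (2 * r))" using assms(4) by (intro sum.cong) auto
  also have "\<dots> = ennreal (2 * r * card D)"
    using assms(4) by (simp add: ennreal_of_nat_eq_real_of_nat ennreal_mult'[symmetric] mult.commute)
  finally show ?thesis using assms by (simp add: ennreal_le_iff)
qed

lemma count4:
  fixes r :: real
  shows "card {k::nat. k < m \<and> r - 2 \<le> real k \<and> real k \<le> r + 1} \<le> 4"
proof -
  have "{k::nat. k < m \<and> r - 2 \<le> real k \<and> real k \<le> r + 1} \<subseteq> {nat \<lceil>r - 2\<rceil> ..< nat \<lceil>r - 2\<rceil> + 4}"
  proof
    fix k assume k: "k \<in> {k::nat. k < m \<and> r - 2 \<le> real k \<and> real k \<le> r + 1}"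
    then have "r - 2 \<le> real k" by simp
    then have "\<lceil>r - 2\<rceil> \<le> int k" by (subst ceiling_le_iff) simp
    moreover have "int k < \<lceil>r - 2\<rceil> + 4"
      using k le_of_int_ceiling[of "r - 2"] by simp linarith
    ultimately show "k \<in> {nat \<lceil>r - 2\<rceil> ..< nat \<lceil>r - 2\<rceil> + 4}" by auto
  qed
  then have "card {k::nat. k < m \<and> r - 2 \<le> real k \<and> real k \<le> r + 1} \<le> card {nat \<lceil>r - 2\<rceil> ..< nat \<lceil>r - 2\<rceil> + 4}"
    by (rule card_mono[rotated]) simp
  then show ?thesis by simp
qed



lemma column_bound:
  fixes J :: "nat set" and g :: "nat \<Rightarrow> real \<Rightarrow> real" and c :: "nat \<Rightarrow> real" and a b \<delta> :: real
  assumes J: "finite J" and ab: "a \<le> b" and dpos: "\<delta> > 0"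
    and gc: "\<And>j. j \<in> J \<Longrightarrow> continuous_on {a..b} (g j)"
  shows "real (cover_num \<delta> (graph_on (\<lambda>x. \<Sum>j\<in>J. c j * g j x) {a..b}))
         \<le> (\<Sum>j\<in>J. 16 * \<bar>c j\<bar> * real (cover_num \<delta> (graph_on (g j) {a..b}))) + 2 * ((b - a) / \<delta> + 1)"
proof -
  define m where "m = nat \<lfloor>(b - a) / \<delta>\<rfloor> + 1"
  define col where "col k = {a + real k * \<delta> .. min b (a + (real k + 1) * \<delta>)}" for k :: nat
  define h where "h x = (\<Sum>j\<in>J. c j * g j x)" for x
  have col_sub: "col k \<subseteq> {a..b}" for k
    unfolding col_def using dpos by auto
  have col_in: "a + real k * \<delta> \<in> col k" if "k < m" for k
  proof -
    have fl: "\<lfloor>(b - a) / \<delta>\<rfloor> \<ge> 0" using ab dpos by simp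
    have "int k \<le> \<lfloor>(b - a) / \<delta>\<rfloor>" using that fl unfolding m_def by linarith
    then have "real k \<le> (b - a) / \<delta>" by (simp add: le_floor_iff)
    then have "real k * \<delta> \<le> b - a" using dpos by (simp add: pos_le_divide_eq)
    then show ?thesis unfolding col_def using dpos by simp
  qed
  have col_cover: "\<exists>k<m. x \<in> col k" if "x \<in> {a..b}" for x
  proof -
    define k where "k = nat \<lfloor>(x - a) / \<delta>\<rfloor>"
    have nn: "(x - a) / \<delta> \<ge> 0" using that dpos by simp
    have k1: "real k \<le> (x - a) / \<delta>" unfolding k_def using nn by linarith
    have k2: "(x - a) / \<delta> < real k + 1" unfolding k_def using nn by linarith
    have "a + real k * \<delta> \<le> x" using k1 dpos by (simp add: pos_le_divide_eq algebra_simps)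
    moreover have "x \<le> a + (real k + 1) * \<delta>" using k2 dpos by (simp add: pos_divide_less_eq algebra_simps)
    moreover have "k < m"
    proof -
      have "\<lfloor>(x - a) / \<delta>\<rfloor> \<le> \<lfloor>(b - a) / \<delta>\<rfloor>"
        using that dpos by (intro floor_mono divide_right_mono) auto
      then show ?thesis unfolding k_def m_def by linarith
    qed
    ultimately show ?thesis using that unfolding col_def by auto
  qed
  have "\<forall>j\<in>J. \<exists>C. finite C \<and> card C = cover_num \<delta> (graph_on (g j) {a..b}) \<and>
           graph_on (g j) {a..b} \<subseteq> (\<Union>d\<in>C. cball d \<delta>)"
    using cover_ex[OF graph_compact[OF compact_Icc gc] dpos] by blast
  then obtain D where D: "\<And>j. j \<in> J \<Longrightarrow> finite (D j) \<and> card (D j) = cover_num \<delta> (graph_on (g j) {a..b}) \<and>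
           graph_on (g j) {a..b} \<subseteq> (\<Union>d\<in>D j. cball d \<delta>)"
    by metis
  define P where "P j d k = (\<exists>x\<in>col k. dist d (x, g j x) \<le> \<delta>)" for j d k
  define B where "B j k = {d \<in> D j. P j d k}" for j k
  have Bfin: "finite (B j k)" if "j \<in> J" for j k
    using D[OF that] unfolding B_def by auto
  have C1: "\<bar>g j x - g j x'\<bar> \<le> 2 * \<delta> * card (B j k)"
    if j: "j \<in> J" and x: "x \<in> col k" "x' \<in> col k" for j k x x'
  proof -
    define p where "p = min (g j x) (g j x')"
    define q where "q = max (g j x) (g j x')"
    have conn: "connected (g j ` col k)"
      by (rule connected_continuous_image[OF continuous_on_subset[OF gc[OF j] col_sub]])
         (simp add: col_def)
    have "{p..q} \<subseteq> g j ` col k"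
      by (rule connected_contains_Icc[OF conn]) (use x in \<open>auto simp: p_def q_def min_def max_def\<close>)
    also have "g j ` col k \<subseteq> (\<Union>d\<in>B j k. {snd d - \<delta> .. snd d + \<delta>})"
    proof
      fix y assume "y \<in> g j ` col k"
      then obtain z where z: "z \<in> col k" "y = g j z" by blast
      then have "(z, g j z) \<in> graph_on (g j) {a..b}" using col_sub unfolding graph_on_def by auto
      then obtain d where d: "d \<in> D j" "dist d (z, g j z) \<le> \<delta>" using D[OF j] by fastforce
      then have dB: "d \<in> B j k" using z unfolding B_def P_def by auto
      have "dist (snd d) (g j z) \<le> \<delta>" using dist_snd_le[of d "(z, g j z)"] d by simp
      then have "y \<in> {snd d - \<delta> .. snd d + \<delta>}" using z by (auto simp: dist_real_def abs_le_iff)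
      with dB show "y \<in> (\<Union>d\<in>B j k. {snd d - \<delta> .. snd d + \<delta>})" by blast
    qed
    finally have sub: "{p..q} \<subseteq> (\<Union>d\<in>B j k. {snd d - \<delta> .. snd d + \<delta>})" .
    have "card (snd ` B j k) \<le> card (B j k)" by (rule card_image_le[OF Bfin[OF j]])
    have "q - p \<le> 2 * \<delta> * card (snd ` B j k)"
      by (rule interval_cover) (use sub Bfin[OF j] dpos in \<open>auto simp: p_def q_def\<close>)
    also have "\<dots> \<le> 2 * \<delta> * card (B j k)"
      using card_image_le[OF Bfin[OF j], of snd] dpos by simp
    finally show ?thesis unfolding p_def q_def by linarith
  qed
  have C2: "(\<Sum>k<m. card (B j k)) \<le> 4 * card (D j)" if j: "j \<in> J" for j
  proof -
    have fD: "finite (D j)" using D[OF j] by blast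
    have "(\<Sum>k<m. card (B j k)) = (\<Sum>k<m. \<Sum>d\<in>D j. if P j d k then 1 else 0)"
      unfolding B_def by (intro sum.cong refl) (simp add: sum.inter_filter[OF fD, symmetric])
    also have "\<dots> = (\<Sum>d\<in>D j. \<Sum>k<m. if P j d k then 1 else 0)" by (rule sum.swap)
    also have "\<dots> = (\<Sum>d\<in>D j. card {k \<in> {..<m}. P j d k})"
      by (intro sum.cong refl) (simp add: sum.inter_filter[symmetric])
    also have "\<dots> \<le> (\<Sum>d\<in>D j. 4)"
    proof (rule sum_mono)
      fix d assume "d \<in> D j"
      define r where "r = (fst d - a) / \<delta>"
      have "{k \<in> {..<m}. P j d k} \<subseteq> {k::nat. k < m \<and> r - 2 \<le> real k \<and> real k \<le> r + 1}"
      proof safe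
        fix k assume "k < m" and Pk: "P j d k"
        then obtain x where x: "x \<in> col k" "dist d (x, g j x) \<le> \<delta>" unfolding P_def by blast
        have "dist (fst d) x \<le> \<delta>" using dist_fst_le[of d "(x, g j x)"] x by simp
        then have fx: "fst d - \<delta> \<le> x" "x \<le> fst d + \<delta>" by (auto simp: dist_real_def abs_le_iff)
        have x1: "a + real k * \<delta> \<le> x" and x2: "x \<le> a + (real k + 1) * \<delta>" using x(1) unfolding col_def by auto
        have "real k * \<delta> \<le> fst d - a + \<delta>" using x1 fx by linarith
        then have "real k \<le> (fst d - a + \<delta>) / \<delta>" using dpos by (simp add: pos_le_divide_eq)
        also have "(fst d - a + \<delta>) / \<delta> = r + 1" unfolding r_def using dpos by (simp add: field_simps)
        finally show "real k \<le> r + 1" .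
        have "fst d - a - 2 * \<delta> \<le> real k * \<delta>" using x2 fx by (simp add: algebra_simps)
        then have "(fst d - a - 2 * \<delta>) / \<delta> \<le> real k" using dpos by (simp add: pos_divide_le_eq)
        moreover have "(fst d - a - 2 * \<delta>) / \<delta> = r - 2" unfolding r_def using dpos by (simp add: field_simps)
        ultimately show "r - 2 \<le> real k" by simp
      qed
      then have "card {k \<in> {..<m}. P j d k} \<le> card {k::nat. k < m \<and> r - 2 \<le> real k \<and> real k \<le> r + 1}"
        by (rule card_mono[rotated]) simp
      also have "\<dots> \<le> 4" by (rule count4)
      finally show "card {k \<in> {..<m}. P j d k} \<le> 4" .
    qed
    also have "\<dots> = 4 * card (D j)" by simp
    finally show ?thesis .
  qed
  define R where "R k = (\<Sum>j\<in>J. \<bar>c j\<bar> * (2 * \<delta> * card (B j k)))" for k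
  define T where "T k = nat \<lceil>2 * R k / \<delta>\<rceil>" for k
  define y0 where "y0 k = h (a + real k * \<delta>)" for k
  define Cov where "Cov = (\<Union>k<m. (\<lambda>t. (a + real k * \<delta> + \<delta>/2, y0 k - R k + real t * \<delta>)) ` {..T k})"
  have Rnn: "R k \<ge> 0" for k unfolding R_def using dpos by (intro sum_nonneg) auto
  have fCov: "finite Cov" unfolding Cov_def by auto
  have covers: "graph_on h {a..b} \<subseteq> (\<Union>p\<in>Cov. cball p \<delta>)"
  proof
    fix z assume "z \<in> graph_on h {a..b}"
    then obtain x where x: "x \<in> {a..b}" "z = (x, h x)" unfolding graph_on_def by blast
    obtain k where k: "k < m" "x \<in> col k" using col_cover[OF x(1)] by blast
    have hx: "\<bar>h x - y0 k\<bar> \<le> R k"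
    proof -
      have "h x - y0 k = (\<Sum>j\<in>J. c j * (g j x - g j (a + real k * \<delta>)))"
        unfolding h_def y0_def by (simp add: sum_subtractf algebra_simps)
      also have "\<bar>\<dots>\<bar> \<le> (\<Sum>j\<in>J. \<bar>c j * (g j x - g j (a + real k * \<delta>))\<bar>)" by (rule sum_abs)
      also have "\<dots> \<le> R k" unfolding R_def
      proof (rule sum_mono)
        fix j assume j: "j \<in> J"
        have "\<bar>g j x - g j (a + real k * \<delta>)\<bar> \<le> 2 * \<delta> * card (B j k)"
          by (rule C1[OF j k(2) col_in[OF k(1)]])
        then show "\<bar>c j * (g j x - g j (a + real k * \<delta>))\<bar> \<le> \<bar>c j\<bar> * (2 * \<delta> * card (B j k))"
          by (simp add: abs_mult mult_left_mono)
      qed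
      finally show ?thesis .
    qed
    define w where "w = (h x - y0 k + R k) / \<delta>"
    have w0: "0 \<le> w" unfolding w_def using hx dpos by (simp add: abs_le_iff)
    have w1: "w \<le> 2 * R k / \<delta>" unfolding w_def using hx dpos by (intro divide_right_mono) (auto simp: abs_le_iff)
    define t where "t = nat \<lfloor>w + 1/2\<rfloor>"
    have t1: "real t \<le> w + 1/2" "w + 1/2 < real t + 1" unfolding t_def using w0 by linarith+
    have tT: "t \<le> T k"
    proof -
      have "w + 1/2 < of_int \<lceil>2 * R k / \<delta>\<rceil> + 1" using w1 le_of_int_ceiling[of "2 * R k / \<delta>"]
        by linarith
      then have "\<lfloor>w + 1/2\<rfloor> \<le> \<lceil>2 * R k / \<delta>\<rceil>" by (simp add: floor_le_iff)
      then show ?thesis unfolding t_def T_def by linarith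
    qed
    define p where "p = (a + real k * \<delta> + \<delta>/2, y0 k - R k + real t * \<delta>)"
    have pC: "p \<in> Cov" unfolding Cov_def p_def using k(1) tT by blast
    have d1: "\<bar>(a + real k * \<delta> + \<delta>/2) - x\<bar> \<le> \<delta>/2"
    proof -
      have "a + real k * \<delta> \<le> x" "x \<le> a + (real k + 1) * \<delta>" using k(2) unfolding col_def by auto
      moreover have "(real k + 1) * \<delta> = real k * \<delta> + \<delta>" by (simp add: algebra_simps)
      ultimately show ?thesis unfolding abs_le_iff by (intro conjI; linarith)
    qed
    have "y0 k - R k + real t * \<delta> - h x = (real t - w) * \<delta>" unfolding w_def using dpos by (simp add: field_simps)
    then have d2: "\<bar>(y0 k - R k + real t * \<delta>) - h x\<bar> \<le> \<delta>/2"
    proof -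
      assume e: "y0 k - R k + real t * \<delta> - h x = (real t - w) * \<delta>"
      have "\<bar>real t - w\<bar> \<le> 1/2" using t1 unfolding abs_le_iff by (intro conjI; linarith)
      then have "\<bar>real t - w\<bar> * \<delta> \<le> 1/2 * \<delta>" using dpos by (intro mult_right_mono) auto
      then show ?thesis unfolding e using dpos by (simp add: abs_mult)
    qed
    have "dist p z = sqrt ((dist (a + real k * \<delta> + \<delta>/2) x)\<^sup>2 + (dist (y0 k - R k + real t * \<delta>) (h x))\<^sup>2)"
      unfolding p_def x(2) by (rule dist_Pair_Pair)
    also have "\<dots> \<le> sqrt ((\<delta>/2)\<^sup>2 + (\<delta>/2)\<^sup>2)"
      using d1 d2 dpos unfolding dist_real_def
      by (intro real_sqrt_le_mono add_mono power_mono) auto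
    also have "\<dots> \<le> sqrt (\<delta>\<^sup>2)" by (intro real_sqrt_le_mono) (simp add: power2_eq_square)
    also have "\<dots> = \<delta>" using dpos by simp
    finally show "z \<in> (\<Union>p\<in>Cov. cball p \<delta>)" using pC by auto
  qed
  have "cover_num \<delta> (graph_on h {a..b}) \<le> card Cov" by (rule cover_le[OF fCov covers])
  also have "card Cov \<le> (\<Sum>k<m. card ((\<lambda>t. (a + real k * \<delta> + \<delta>/2, y0 k - R k + real t * \<delta>)) ` {..T k}))"
    unfolding Cov_def by (rule card_UN_le) simp
  also have "\<dots> \<le> (\<Sum>k<m. T k + 1)"
    by (intro sum_mono order_trans[OF card_image_le]) auto
  finally have "real (cover_num \<delta> (graph_on h {a..b})) \<le> real (\<Sum>k<m. T k + 1)"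
    by (rule of_nat_mono)
  then have N1: "real (cover_num \<delta> (graph_on h {a..b})) \<le> (\<Sum>k<m. real (T k) + 1)"
    by (simp add: add.commute)
  also have "\<dots> \<le> (\<Sum>k<m. 2 * R k / \<delta> + 2)"
  proof (rule sum_mono)
    fix k
    have "real (T k) = of_int \<lceil>2 * R k / \<delta>\<rceil>" unfolding T_def using Rnn[of k] dpos by simp
    also have "\<dots> \<le> 2 * R k / \<delta> + 1" by linarith
    finally show "real (T k) + 1 \<le> 2 * R k / \<delta> + 2" by simp
  qed
  also have "\<dots> = (\<Sum>k<m. \<Sum>j\<in>J. 4 * \<bar>c j\<bar> * real (card (B j k))) + 2 * real m"
  proof -
    have e: "2 * R k / \<delta> = (\<Sum>j\<in>J. 4 * \<bar>c j\<bar> * real (card (B j k)))" for k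
      unfolding R_def sum_distrib_left sum_divide_distrib by (rule sum.cong) (use dpos in auto)
    show ?thesis by (simp add: sum.distrib e)
  qed
  also have "(\<Sum>k<m. \<Sum>j\<in>J. 4 * \<bar>c j\<bar> * real (card (B j k))) = (\<Sum>j\<in>J. 4 * \<bar>c j\<bar> * real (\<Sum>k<m. card (B j k)))"
    by (subst sum.swap) (simp add: sum_distrib_left)
  also have "\<dots> \<le> (\<Sum>j\<in>J. 16 * \<bar>c j\<bar> * real (cover_num \<delta> (graph_on (g j) {a..b})))"
  proof (rule sum_mono)
    fix j assume j: "j \<in> J"
    have "real (\<Sum>k<m. card (B j k)) \<le> 4 * real (cover_num \<delta> (graph_on (g j) {a..b}))"
    proof -
      have "(\<Sum>k<m. card (B j k)) \<le> 4 * cover_num \<delta> (graph_on (g j) {a..b})" using C2[OF j] D[OF j] by simp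
      then have "real (\<Sum>k<m. card (B j k)) \<le> real (4 * cover_num \<delta> (graph_on (g j) {a..b}))" by (rule of_nat_mono)
      then show ?thesis by simp
    qed
    then show "4 * \<bar>c j\<bar> * real (\<Sum>k<m. card (B j k)) \<le> 16 * \<bar>c j\<bar> * real (cover_num \<delta> (graph_on (g j) {a..b}))"
      using mult_left_mono[of _ _ "4 * \<bar>c j\<bar>"] by fastforce
  qed
  also have "real m \<le> (b - a) / \<delta> + 1"
  proof -
    have "real (nat \<lfloor>(b - a) / \<delta>\<rfloor>) \<le> (b - a) / \<delta>" using ab dpos by simp
    then show ?thesis unfolding m_def by simp
  qed
  then have "2 * real m \<le> 2 * ((b - a) / \<delta> + 1)" by (rule mult_left_mono) simp
  finally show ?thesis unfolding h_def by simp
qed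



theorem proposition4p1:
  fixes s :: real and n :: nat and f :: "nat \<Rightarrow> real \<Rightarrow> real"
  assumes s_range: "1 < s" "s \<le> 2"
    and cont: "\<And>i. i < n \<Longrightarrow> continuous_on {0..1} (f i)"
    and dim_f: "\<And>i. i < n \<Longrightarrow> upper_box_dim (graph_on (f i) {0..1}) = ereal s"
    and lin_indep: "\<And>a :: nat \<Rightarrow> real.
          (\<forall>x\<in>{0..1}. (\<Sum>i<n. a i * f i x) = 0) \<Longrightarrow> (\<forall>i<n. a i = 0)"
    and span: "\<And>a :: nat \<Rightarrow> real.
          (\<forall>x\<in>{0..1}. (\<Sum>i<n. a i * f i x) = 0) \<or>
          upper_box_dim (graph_on (\<lambda>x. \<Sum>i<n. a i * f i x) {0..1}) = ereal s"
  shows "\<exists>u v. 0 \<le> u \<and> u < v \<and> v \<le> 1 \<and>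
           (\<forall>a :: nat \<Rightarrow> real. (\<exists>i<n. a i \<noteq> 0) \<longrightarrow>
              upper_box_dim (graph_on (\<lambda>x. \<Sum>i<n. a i * f i x) ({0..1} - {u<..<v})) = ereal s)"
proof (cases "n = 0")
  case True
  show ?thesis by (intro exI[of _ 0] exI[of _ 1]) (simp add: True)
next
  case False
  define gf where "gf = (\<lambda>(a::nat \<Rightarrow> real) x. \<Sum>i<n. a i * f i x)"
  have gcont: "continuous_on {0..1} (gf a)" for a
    unfolding gf_def by (intro continuous_intros cont) auto
  define u where "u k = real k / real (n + 1)" for k :: nat
  define v where "v k = (real k + 1) / real (n + 1)" for k :: nat
  define E where "E k = {0..1::real} - {u k<..<v k}" for k
  have uv: "0 \<le> u k \<and> u k < v k \<and> v k \<le> 1" if "k \<le> n" for k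
    using that unfolding u_def v_def by (auto simp: divide_simps)
  have cE: "compact (E k)" for k unfolding E_def by (intro compact_diff) auto
  have Esub: "E k \<subseteq> {0..1}" for k unfolding E_def by auto
  show ?thesis
  proof (rule ccontr)
    assume H: "\<not> ?thesis"
    have "\<forall>k\<in>{..n}. \<exists>a. (\<exists>i<n. a i \<noteq> 0) \<and> upper_box_dim (graph_on (gf a) (E k)) \<noteq> ereal s"
    proof
      fix k assume "k \<in> {..n}"
      then have "0 \<le> u k \<and> u k < v k \<and> v k \<le> 1" using uv by auto
      then show "\<exists>a. (\<exists>i<n. a i \<noteq> 0) \<and> upper_box_dim (graph_on (gf a) (E k)) \<noteq> ereal s"
        using H unfolding E_def gf_def by blast
    qed
    then obtain A where A: "\<And>k. k \<in> {..n} \<Longrightarrow> (\<exists>i<n. A k i \<noteq> 0) \<and> upper_box_dim (graph_on (gf (A k)) (E k)) \<noteq> ereal s"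
      by metis
    have full: "upper_box_dim (graph_on (gf (A k)) {0..1}) = ereal s" if "k \<in> {..n}" for k
    proof -
      have "\<not> (\<forall>x\<in>{0..1}. (\<Sum>i<n. A k i * f i x) = 0)" using lin_indep[of "A k"] A[OF that] by blast
      then show ?thesis using span[of "A k"] unfolding gf_def by blast
    qed
    have ltE: "upper_box_dim (graph_on (gf (A k)) (E k)) < ereal s" if "k \<in> {..n}" for k
    proof -
      have "upper_box_dim (graph_on (gf (A k)) (E k)) \<le> upper_box_dim (graph_on (gf (A k)) {0..1})"
      proof (rule dim_mono)
        show "graph_on (gf (A k)) (E k) \<subseteq> graph_on (gf (A k)) {0..1}" using Esub unfolding graph_on_def by auto
        show "compact (graph_on (gf (A k)) {0..1})" by (rule graph_compact[OF compact_Icc gcont])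
      qed
      then show ?thesis using full[OF that] A[OF that] by auto
    qed
    have "\<forall>k\<in>{..n}. \<exists>t. 1 \<le> t \<and> t < s \<and> eventually (\<lambda>d. real (cover_num d (graph_on (gf (A k)) (E k))) \<le> d powr (-t)) (at_right 0)"
    proof
      fix k assume k: "k \<in> {..n}"
      obtain r where r: "upper_box_dim (graph_on (gf (A k)) (E k)) < ereal r" "ereal r < ereal s"
        using ereal_dense2[OF ltE[OF k]] by blast
      define t where "t = max r 1"
      have "upper_box_dim (graph_on (gf (A k)) (E k)) < ereal t"
        using r(1) unfolding t_def by (simp add: order_less_le_trans)
      then show "\<exists>t. 1 \<le> t \<and> t < s \<and> eventually (\<lambda>d. real (cover_num d (graph_on (gf (A k)) (E k))) \<le> d powr (-t)) (at_right 0)"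
        using dim_lt_D r(2) s_range unfolding t_def by (intro exI[of _ "max r 1"]) auto
    qed
    then obtain T where T: "\<And>k. k \<in> {..n} \<Longrightarrow> 1 \<le> T k \<and> T k < s \<and> eventually (\<lambda>d. real (cover_num d (graph_on (gf (A k)) (E k))) \<le> d powr (- T k)) (at_right 0)"
      by metis
    define tm where "tm = Max (T ` {..n})"
    have tm: "1 \<le> tm" "tm < s" "\<And>k. k \<in> {..n} \<Longrightarrow> T k \<le> tm"
      using T unfolding tm_def by (auto simp: Max_ge_iff Max_less_iff intro!: bexI[of _ 0])
    have evT: "eventually (\<lambda>d. \<forall>k\<in>{..n}. real (cover_num d (graph_on (gf (A k)) (E k))) \<le> d powr (- tm)) (at_right 0)"
    proof (rule eventually_ball_finite)
      show "\<forall>k\<in>{..n}. eventually (\<lambda>d. real (cover_num d (graph_on (gf (A k)) (E k))) \<le> d powr (- tm)) (at_right 0)"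
      proof
        fix k assume k: "k \<in> {..n}"
        show "eventually (\<lambda>d. real (cover_num d (graph_on (gf (A k)) (E k))) \<le> d powr (- tm)) (at_right 0)"
          using conjunct2[OF conjunct2[OF T[OF k]]] ev_small
        proof eventually_elim
          case (elim d)
          have "d powr (- T k) \<le> d powr (- tm)" using elim tm(3)[OF k] by (intro powr_mono') auto
          moreover have "real (cover_num d (graph_on (gf (A k)) (E k))) \<le> d powr (- T k)" using elim by simp
          ultimately show ?case by linarith
        qed
      qed
    qed auto
    obtain c where c: "\<exists>k\<in>{..n}. c k \<noteq> 0" "\<forall>i<n. (\<Sum>k\<in>{..n}. c k * A k i) = 0"
      using lin_dep[of "{..n}" n A] by auto
    then obtain k0 where k0: "k0 \<in> {..n}" "c k0 \<noteq> 0" by blast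
    define J where "J = {..n} - {k0}"
    define c' where "c' k = - c k / c k0" for k
    have zero: "(\<Sum>k\<in>{..n}. c k * gf (A k) x) = 0" for x
    proof -
      have "(\<Sum>k\<in>{..n}. c k * gf (A k) x) = (\<Sum>i<n. (\<Sum>k\<in>{..n}. c k * A k i) * f i x)"
        unfolding gf_def by (simp add: sum_distrib_left sum_distrib_right mult.assoc sum.swap[of _ "{..n}"])
      also have "\<dots> = 0" using c(2) by simp
      finally show ?thesis .
    qed
    have comb: "gf (A k0) x = (\<Sum>k\<in>J. c' k * gf (A k) x)" for x
    proof -
      have "(\<Sum>k\<in>{..n}. c k * gf (A k) x) = c k0 * gf (A k0) x + (\<Sum>k\<in>J. c k * gf (A k) x)"
        unfolding J_def using k0 by (simp add: sum.remove)
      then have "c k0 * gf (A k0) x = - (\<Sum>k\<in>J. c k * gf (A k) x)" using zero[of x] by simp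
      then have "gf (A k0) x = - (\<Sum>k\<in>J. c k * gf (A k) x) / c k0" using k0(2) by (simp add: field_simps)
      also have "\<dots> = (\<Sum>k\<in>J. c' k * gf (A k) x)"
        unfolding c'_def by (simp add: sum_divide_distrib sum_negf[symmetric])
      finally show ?thesis .
    qed
    define a0 where "a0 = u k0"
    define b0 where "b0 = v k0"
    have ab0: "0 \<le> a0" "a0 < b0" "b0 \<le> 1" using uv k0 unfolding a0_def b0_def by auto
    have IsubE: "{a0..b0} \<subseteq> E k" if "k \<in> J" for k
    proof
      fix x assume x: "x \<in> {a0..b0}"
      have "k \<noteq> k0" using that unfolding J_def by auto
      then consider "k + 1 \<le> k0" | "k0 + 1 \<le> k" by linarith
      then have "x \<le> u k \<or> v k \<le> x"
      proof cases
        case 1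
        then have "real k + 1 \<le> real k0" by linarith
        then have "v k \<le> u k0" unfolding u_def v_def by (simp add: divide_right_mono)
        then show ?thesis using x unfolding a0_def by auto
      next
        case 2
        then have "real k0 + 1 \<le> real k" by linarith
        then have "v k0 \<le> u k" unfolding u_def v_def by (simp add: divide_right_mono)
        then show ?thesis using x unfolding b0_def by auto
      qed
      then show "x \<in> E k" using x ab0 unfolding E_def by auto
    qed
    have Ifull: "{0..1} = {a0..b0} \<union> E k0" unfolding E_def a0_def b0_def using uv[of k0] k0 by auto
    define K where "K = (\<Sum>k\<in>J. 16 * \<bar>c' k\<bar>) + 4"
    have "eventually (\<lambda>d. real (cover_num d (graph_on (gf (A k0)) {0..1})) \<le> (K + 1) * d powr (- tm)) (at_right 0)"
      using evT ev_small
    proof eventually_elim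
      case (elim d)
      have d: "0 < d" "d < 1" using elim by auto
      have p1: "1 \<le> d powr (- tm)" using d tm(1) powr_mono'[of "-tm" 0 d] by simp
      have p2: "1 / d \<le> d powr (- tm)"
      proof -
        have "d powr (-1) \<le> d powr (- tm)" using d tm(1) by (intro powr_mono') auto
        moreover have "d powr (-1) = 1 / d" using d by (simp add: powr_minus_divide)
        ultimately show ?thesis by simp
      qed
      have Nk: "real (cover_num d (graph_on (gf (A k)) {a0..b0})) \<le> d powr (- tm)" if k: "k \<in> J" for k
      proof -
        have "cover_num d (graph_on (gf (A k)) {a0..b0}) \<le> cover_num d (graph_on (gf (A k)) (E k))"
        proof (rule cover_mono)
          show "graph_on (gf (A k)) {a0..b0} \<subseteq> graph_on (gf (A k)) (E k)" using IsubE[OF k] unfolding graph_on_def by auto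
          show "compact (graph_on (gf (A k)) (E k))" by (rule graph_compact[OF cE continuous_on_subset[OF gcont Esub]])
        qed (use d in auto)
        moreover have "k \<in> {..n}" using k unfolding J_def by auto
        ultimately show ?thesis using elim by force
      qed
      have fJ: "finite J" unfolding J_def by auto
      have geq: "graph_on (gf (A k0)) {a0..b0} = graph_on (\<lambda>x. \<Sum>k\<in>J. c' k * gf (A k) x) {a0..b0}"
        by (rule graph_cong) (rule comb)
      have "real (cover_num d (graph_on (gf (A k0)) {a0..b0}))
          \<le> (\<Sum>k\<in>J. 16 * \<bar>c' k\<bar> * real (cover_num d (graph_on (gf (A k)) {a0..b0}))) + 2 * ((b0 - a0) / d + 1)"
        unfolding geq
      proof (rule column_bound[OF fJ])
        show "a0 \<le> b0" using ab0 by simp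
        show "0 < d" using d by simp
        fix k show "continuous_on {a0..b0} (gf (A k))"
          by (rule continuous_on_subset[OF gcont]) (use ab0 in auto)
      qed
      moreover have S1: "(\<Sum>k\<in>J. 16 * \<bar>c' k\<bar> * real (cover_num d (graph_on (gf (A k)) {a0..b0})))
          \<le> (\<Sum>k\<in>J. 16 * \<bar>c' k\<bar> * d powr (- tm))"
        by (intro sum_mono mult_left_mono Nk) auto
      moreover have S2: "2 * ((b0 - a0) / d + 1) \<le> 4 * d powr (- tm)"
      proof -
        have "(b0 - a0) / d \<le> 1 / d" using ab0 d by (intro divide_right_mono) auto
        then have "(b0 - a0) / d \<le> d powr (- tm)" using p2 by (rule order_trans)
        moreover obtain X P where "X = (b0 - a0) / d" "P = d powr (- tm)" by blast
        ultimately show ?thesis using p1 by (smt (verit))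
      qed
      ultimately have "real (cover_num d (graph_on (gf (A k0)) {a0..b0})) \<le> (\<Sum>k\<in>J. 16 * \<bar>c' k\<bar> * d powr (- tm)) + 4 * d powr (- tm)"
        by linarith
      moreover have "(\<Sum>k\<in>J. 16 * \<bar>c' k\<bar> * d powr (- tm)) = (\<Sum>k\<in>J. 16 * \<bar>c' k\<bar>) * d powr (- tm)"
        by (rule sum_distrib_right[symmetric])
      ultimately have NI: "real (cover_num d (graph_on (gf (A k0)) {a0..b0})) \<le> K * d powr (- tm)"
        unfolding K_def by (simp add: distrib_right)
      have "graph_on (gf (A k0)) {0..1} = graph_on (gf (A k0)) {a0..b0} \<union> graph_on (gf (A k0)) (E k0)"
        unfolding Ifull graph_on_def by (rule image_Un)
      then have "cover_num d (graph_on (gf (A k0)) {0..1}) \<le> cover_num d (graph_on (gf (A k0)) {a0..b0}) + cover_num d (graph_on (gf (A k0)) (E k0))"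
        using cover_union[of "graph_on (gf (A k0)) {a0..b0}" "graph_on (gf (A k0)) (E k0)" d] d
          graph_compact[OF compact_Icc continuous_on_subset[OF gcont]] graph_compact[OF cE continuous_on_subset[OF gcont Esub]] ab0
        by auto
      then have "real (cover_num d (graph_on (gf (A k0)) {0..1})) \<le> real (cover_num d (graph_on (gf (A k0)) {a0..b0})) + real (cover_num d (graph_on (gf (A k0)) (E k0)))"
        by (metis of_nat_add of_nat_mono)
      also have "\<dots> \<le> K * d powr (- tm) + d powr (- tm)" using NI elim k0 by (intro add_mono) auto
      finally show ?case by (simp add: algebra_simps)
    qed
    then have "upper_box_dim (graph_on (gf (A k0)) {0..1}) \<le> ereal ((tm + s) / 2)"
      by (rule dim_le_const[rotated 2]) (use tm in auto)
    moreover have "ereal ((tm + s) / 2) < ereal s" using tm by simp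
    ultimately show False using full[OF k0(1)] by simp
  qed
qed

end
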